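(* For $\theta\in \mathrm{SL}_2(\mathbb Z)$ let $\widehat\theta\in\mathrm{Aut}_{\mathbb F}(\mathfrak{sl}_2)$ be $\widehat\theta(u)=\theta u\theta^{-1}$. The homomorphism $\theta\mapsto\widehat\theta$ from $\mathrm{SL}_2(\mathbb Z)$ to $\mathrm{Aut}_{\mathbb F}(\mathfrak{sl}_2)$ has kernel $\{\pm I\}$ and so induces an injective homomorphism $\imath:\mathrm{PSL}_2(\mathbb Z)\to \mathrm{Aut}_{\mathbb F}(\mathfrak{sl}_2)$. The image of $\imath$ is exactly the group $G$. In particular $G\cong \mathrm{PSL}_2(\mathbb Z)$.
   Context: $\mathbb F$ is a field of characteristic zero and $\mathfrak{sl}_2$ is the Lie algebra of $2\times 2$ trace-zero matrices over $\mathbb F$, with $\mathrm{ad}\,u(v)=[u,v]$. Let $x^*=\begin{pmatrix}1&-1\\1&-1\end{pmatrix}$, $y^*=\begin{pmatrix}0&0\\1&0\end{pmatrix}$, $z^*=\begin{pmatrix}0&-1\\0&0\end{pmatrix}$. These are nilpotent, so $\exp(\mathrm{ad}\,u)=\sum_{n\ge0}(\mathrm{ad}\,u)^n/n!$ is a well-defined automorphism of $\mathfrak{sl}_2$ for $u\in\{x^*,y^*,z^*\}$. $G$ is the subgroup of $\mathrm{Aut}_{\mathbb F}(\mathfrak{sl}_2)$ generated by $\exp(\mathrm{ad}\,x^* )$, $\exp(\mathrm{ad}\,y^* )$ and $\exp(\mathrm{ad}\,z^* )$. *)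

theory Defs
  imports "HOL-Analysis.Analysis" "HOL-Library.FuncSet"
begin

type_synonym 'a mat2 = "'a ^ 2 ^ 2"

definition sl2 :: "('a::field) mat2 set" where
  "sl2 = {A. trace A = 0}"

definition lie_bracket :: "('a::field) mat2 \<Rightarrow> 'a mat2 \<Rightarrow> 'a mat2" where
  "lie_bracket u v = u ** v - v ** u"

definition ad :: "('a::field) mat2 \<Rightarrow> 'a mat2 \<Rightarrow> 'a mat2" where
  "ad u = (\<lambda>v. lie_bracket u v)"

definition smat :: "'a::field \<Rightarrow> 'a mat2 \<Rightarrow> 'a mat2" where
  "smat c A = (\<chi> i j. c * A $ i $ j)"

definition exp_nil :: "(('a::field_char_0) mat2 \<Rightarrow> 'a mat2) \<Rightarrow> 'a mat2 \<Rightarrow> 'a mat2" where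
  "exp_nil f v = (\<Sum>n < (LEAST k. \<forall>w\<in>sl2. (f ^^ k) w = 0). smat (inverse (fact n)) ((f ^^ n) v))"

definition exp_ad :: "('a::field_char_0) mat2 \<Rightarrow> 'a mat2 \<Rightarrow> 'a mat2" where
  "exp_ad u = restrict (exp_nil (ad u)) sl2"

definition xs :: "('a::field) mat2" where
  "xs = vector [vector [1, -1], vector [1, -1]]"
definition ys :: "('a::field) mat2" where
  "ys = vector [vector [0, 0], vector [1, 0]]"
definition zs :: "('a::field) mat2" where
  "zs = vector [vector [0, -1], vector [0, 0]]"

definition Aut_sl2 :: "(('a::field) mat2 \<Rightarrow> 'a mat2) set" where
  "Aut_sl2 = {\<phi>. \<phi> \<in> extensional sl2 \<and> bij_betw \<phi> sl2 sl2
     \<and> (\<forall>u\<in>sl2. \<forall>v\<in>sl2. \<forall>a b. \<phi> (smat a u + smat b v) = smat a (\<phi> u) + smat b (\<phi> v))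
     \<and> (\<forall>u\<in>sl2. \<forall>v\<in>sl2. \<phi> (lie_bracket u v) = lie_bracket (\<phi> u) (\<phi> v))}"

definition gens :: "(('a::field_char_0) mat2 \<Rightarrow> 'a mat2) set" where
  "gens = {exp_ad xs, exp_ad ys, exp_ad zs}"

text \<open>G: the subgroup of Aut(sl_2) generated by the three automorphisms
  (closure of the identity under composition with generators and their inverses).\<close>
inductive_set Ggrp :: "(('a::field_char_0) mat2 \<Rightarrow> 'a mat2) set" where
  Gid: "restrict id sl2 \<in> Ggrp"
| Ggen: "g \<in> Ggrp \<Longrightarrow> s \<in> gens \<Longrightarrow> restrict (s \<circ> g) sl2 \<in> Ggrp"
| Ginv: "g \<in> Ggrp \<Longrightarrow> s \<in> gens \<Longrightarrow> restrict (inv_into sl2 s \<circ> g) sl2 \<in> Ggrp"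

definition SL2Z :: "int mat2 set" where
  "SL2Z = {\<theta>. det \<theta> = 1}"

definition hat :: "int mat2 \<Rightarrow> ('a::field_char_0) mat2 \<Rightarrow> 'a mat2" where
  "hat \<theta> = restrict (\<lambda>u. map_matrix of_int \<theta> ** u ** matrix_inv (map_matrix of_int \<theta>)) sl2"

end

theory Submission
  imports Defs
begin

lemma mat2_eq: "(A::'a^2^2) = B \<longleftrightarrow> A$1$1 = B$1$1 \<and> A$1$2 = B$1$2 \<and> A$2$1 = B$2$1 \<and> A$2$2 = B$2$2"
  by (auto simp: vec_eq_iff forall_2)

lemma mult2: "((A::'a::semiring_1^2^2) ** B) $ i $ j = A$i$1 * B$1$j + A$i$2 * B$2$j"
  by (simp add: matrix_matrix_mult_def sum_2)

lemma mat_ent: "(mat k :: 'a::zero^2^2)$1$1 = k" "(mat k :: 'a::zero^2^2)$2$2 = k"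
  "(mat k :: 'a::zero^2^2)$1$2 = 0" "(mat k :: 'a::zero^2^2)$2$1 = 0"
  by (simp_all add: mat_def)

lemma tr2: "trace (A::'a::field^2^2) = A$1$1 + A$2$2"
  by (simp add: trace_def sum_2)

lemma sl2_iff: "(A::'a::field^2^2) \<in> sl2 \<longleftrightarrow> A$2$2 = - A$1$1"
  by (auto simp: sl2_def tr2 eq_neg_iff_add_eq_0 add.commute)

lemma smat_ent[simp]: "smat c A $ i $ j = c * A $ i $ j" by (simp add: smat_def)

lemma lb_ent: "lie_bracket u v $ i $ j = (u ** v) $ i $ j - (v ** u) $ i $ j" by (simp add: lie_bracket_def)

definition adj2 :: "'a::comm_ring_1^2^2 \<Rightarrow> 'a^2^2" where
  "adj2 A = vector [vector [A$2$2, - A$1$2], vector [- A$2$1, A$1$1]]"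

lemma adj2_ent[simp]: "adj2 A $1$1 = A$2$2" "adj2 A $1$2 = - A$1$2" "adj2 A $2$1 = - A$2$1" "adj2 A $2$2 = A$1$1"
  by (simp_all add: adj2_def)

lemma inv_det1:
  fixes A :: "'a::field^2^2"
  assumes "det A = 1" shows "matrix_inv A = adj2 A"
proof -
  have h: "A$1$1 * A$2$2 - A$1$2 * A$2$1 = 1" using assms by (simp add: det_2)
  have a: "A ** adj2 A = mat 1" "adj2 A ** A = mat 1"
    using h by (simp_all add: mat2_eq mult2 mat_ent algebra_simps)
  have i: "A ** matrix_inv A = mat 1 \<and> matrix_inv A ** A = mat 1"
    unfolding matrix_inv_def by (rule someI[of _ "adj2 A"]) (use a in auto)
  have "matrix_inv A = adj2 A ** (A ** matrix_inv A)" 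
    by (simp add: matrix_mul_assoc a)
  then show ?thesis using i by simp
qed

lemma adj2_mult: "adj2 P ** P = mat (det P)" "P ** adj2 P = mat (det P)"
  by (simp_all add: mat2_eq mult2 mat_ent det_2 algebra_simps)

lemma madd_l: "(A::'a::comm_ring_1^2^2) ** (B - C::'a^2^2) = A ** B - A ** C"
  by (simp only: mat2_eq) (simp add: mult2 right_diff_distrib)
lemma madd_r: "((B::'a::comm_ring_1^2^2) - C) ** (A::'a^2^2) = B ** A - C ** A"
  by (simp only: mat2_eq) (simp add: mult2 left_diff_distrib)

definition cj :: "'a::comm_ring_1^2^2 \<Rightarrow> 'a^2^2 \<Rightarrow> 'a^2^2" where
  "cj P u = P ** u ** adj2 P"

lemma cj_trace: "trace (cj P u :: 'a::field^2^2) = det P * trace u"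
  by (simp add: cj_def tr2 mult2 det_2 algebra_simps)

lemma cj_sl2: "det P = 1 \<Longrightarrow> u \<in> sl2 \<Longrightarrow> cj P u \<in> sl2"
  by (simp add: sl2_def cj_trace)

lemma adj2_adj2[simp]: "adj2 (adj2 P) = P" by (simp add: mat2_eq)
lemma adj2_prod: "adj2 (A ** B) = adj2 B ** adj2 A" by (simp add: mat2_eq mult2 algebra_simps)
lemma det_adj2: "det (adj2 P) = det P" by (simp add: det_2 algebra_simps)

lemma cj_cj: "cj P (cj Q u) = cj (P ** Q) u"
  by (simp add: cj_def adj2_prod matrix_mul_assoc)

lemma cj_one: "det P = 1 \<Longrightarrow> cj (adj2 P) (cj P u) = u"
  unfolding cj_cj cj_def adj2_adj2 
  by (metis adj2_mult matrix_mul_assoc matrix_mul_lid matrix_mul_rid)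
lemma cj_one': "det P = 1 \<Longrightarrow> cj P (cj (adj2 P) u) = u"
  unfolding cj_cj cj_def adj2_adj2 
  by (metis adj2_mult matrix_mul_assoc matrix_mul_lid matrix_mul_rid)

lemma cj_lin: "cj P (smat a u + smat b v) = smat a (cj P u) + smat b (cj P v)"
  by (simp add: cj_def mat2_eq mult2 algebra_simps)

lemma cj_br: "det P = 1 \<Longrightarrow> cj P (lie_bracket u v) = lie_bracket (cj P u) (cj P v)"
  unfolding cj_def lie_bracket_def
  by (simp add: madd_l madd_r matrix_mul_assoc)
     (metis (no_types) adj2_mult(1) matrix_mul_assoc matrix_mul_rid)

abbreviation MF :: "int^2^2 \<Rightarrow> 'a::field_char_0^2^2" where "MF \<equiv> map_matrix of_int"

lemma det_MF: "det (MF t :: 'a::field_char_0^2^2) = of_int (det t)"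
  by (simp add: det_2)

lemma SL2Z_det: "t \<in> SL2Z \<Longrightarrow> det (MF t :: 'a::field_char_0^2^2) = 1"
  by (simp add: det_MF SL2Z_def)

lemma MF_mult: "MF (A ** B) = (MF A ** MF B :: 'a::field_char_0^2^2)"
  by (simp add: mat2_eq mult2)

lemma MF_adj2: "MF (adj2 A) = (adj2 (MF A) :: 'a::field_char_0^2^2)"
  by (simp add: mat2_eq)

lemma hat_eq: "t \<in> SL2Z \<Longrightarrow> u \<in> sl2 \<Longrightarrow> hat t u = cj (MF t) (u::'a::field_char_0^2^2)"
  by (simp add: hat_def inv_det1 SL2Z_det cj_def)

lemma hat_sl2: "t \<in> SL2Z \<Longrightarrow> u \<in> sl2 \<Longrightarrow> hat t u \<in> (sl2::('a::field_char_0^2^2) set)"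
  by (simp add: hat_eq cj_sl2 SL2Z_det)

lemma adj2_SL2Z: "t \<in> SL2Z \<Longrightarrow> adj2 t \<in> SL2Z"
  by (simp add: SL2Z_def det_adj2)

lemma sl2_lin: "u \<in> sl2 \<Longrightarrow> v \<in> sl2 \<Longrightarrow> smat a u + smat b v \<in> sl2"
  by (simp add: sl2_iff algebra_simps)

lemma sl2_br: "lie_bracket u v \<in> (sl2::('a::field^2^2) set)"
  by (simp add: sl2_iff lb_ent mult2 algebra_simps)

lemma hat_aut: "t \<in> SL2Z \<Longrightarrow> (hat t :: 'a::field_char_0 mat2 \<Rightarrow> 'a mat2) \<in> Aut_sl2"
proof -
  assume t: "t \<in> SL2Z"
  have inv: "hat (adj2 t) (hat t u) = u" "hat t (hat (adj2 t) u) = u" if "u \<in> sl2" for u :: "'a mat2"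
    using that t by (simp_all add: hat_eq hat_sl2 adj2_SL2Z MF_adj2 cj_one cj_one' SL2Z_det cj_sl2 det_adj2)
  have "bij_betw (hat t) sl2 (sl2::'a mat2 set)"
    by (rule bij_betw_byWitness[where f'="hat (adj2 t)"]) 
       (use inv t in \<open>auto intro: hat_sl2 adj2_SL2Z\<close>)
  moreover have "hat t \<in> extensional sl2" by (simp add: hat_def)
  ultimately show ?thesis
    unfolding Aut_sl2_def using t
    by (simp add: hat_eq sl2_lin sl2_br cj_lin cj_br SL2Z_det)
qed

lemma hat_comp: "t1 \<in> SL2Z \<Longrightarrow> t2 \<in> SL2Z \<Longrightarrow>
   (hat (t1 ** t2) :: 'a::field_char_0 mat2 \<Rightarrow> 'a mat2) = restrict (hat t1 \<circ> hat t2) sl2"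
proof -
  assume a: "t1 \<in> SL2Z" "t2 \<in> SL2Z"
  then have "t1 ** t2 \<in> SL2Z" by (simp add: SL2Z_def det_mul)
  show ?thesis
  proof
    fix u :: "'a mat2"
    show "hat (t1 ** t2) u = restrict (hat t1 \<circ> hat t2) sl2 u"
    proof (cases "u \<in> sl2")
      case True
      then show ?thesis using a \<open>t1 ** t2 \<in> SL2Z\<close> by (simp add: hat_eq hat_sl2 cj_cj MF_mult cj_sl2 SL2Z_det)
    next
      case False
      then show ?thesis by (simp add: hat_def)
    qed
  qed
qed

definition E1 :: "'a::field mat2" where "E1 = vector [vector [0, 1], vector [0, 0]]"
definition E2 :: "'a::field mat2" where "E2 = vector [vector [0, 0], vector [1, 0]]"

lemma hat_id: "t \<in> {mat 1, - mat 1} \<Longrightarrow> t \<in> SL2Z \<and> (hat t :: 'a::field_char_0 mat2 \<Rightarrow> 'a mat2) = restrict id sl2"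
  by (auto simp: SL2Z_def det_2 mat_ent hat_eq cj_def mat2_eq mult2 intro!: ext) (auto simp: hat_def)

lemma ker: 
  assumes t: "t \<in> SL2Z" and h: "(hat t :: 'a::field_char_0 mat2 \<Rightarrow> 'a mat2) = restrict id sl2"
  shows "t \<in> {mat 1, - mat 1}"
proof -
  have "E1 \<in> (sl2 :: 'a mat2 set)" "E2 \<in> (sl2 :: 'a mat2 set)" by (simp_all add: sl2_iff E1_def E2_def)
  then have e: "cj (MF t) E1 = (E1 :: 'a mat2)" "cj (MF t) E2 = (E2 :: 'a mat2)"
    using h t by (metis hat_eq id_apply restrict_apply)+
  have c: "t$2$1 = 0" "t$1$2 = 0"
    using e by (simp_all add: cj_def mat2_eq mult2 E1_def E2_def)
  have "t$1$1 * t$2$2 = 1" using t c by (simp add: SL2Z_def det_2)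
  then have "(t$1$1 = 1 \<and> t$2$2 = 1) \<or> (t$1$1 = -1 \<and> t$2$2 = -1)" by (simp add: zmult_eq_1_iff)
  then show ?thesis using c by (auto simp: mat2_eq mat_ent)
qed

lemma ad_0: "ad u (0::'a::field mat2) = 0" by (simp add: ad_def lie_bracket_def)
lemma funpow_0: "(ad u ^^ k) (0::'a::field mat2) = 0" by (induct k) (simp_all add: ad_0)

lemma exp_ad_eq:
  fixes u :: "'a::field_char_0 mat2"
  assumes n3: "\<And>w. ad u (ad u (ad u w)) = 0" and v: "v \<in> sl2"
  shows "exp_ad u v = v + ad u v + smat (1/2) (ad u (ad u v))"
proof -
  define P where "P k = (\<forall>w\<in>sl2. (ad u ^^ k) w = 0)" for k
  define L where "L = (LEAST k. P k)"
  have P3: "P 3" using n3 by (simp add: P_def numeral_3_eq_3)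
  then have L3: "L \<le> 3" unfolding L_def by (rule Least_le)
  have PL: "P L" unfolding L_def using P3 by (rule LeastI)
  define g where "g n = smat (inverse (fact n)) ((ad u ^^ n) v)" for n
  have "exp_ad u v = sum g {..<L}"
    using v by (simp add: exp_ad_def exp_nil_def g_def L_def P_def)
  also have "\<dots> = sum g {..<3}"
  proof (rule sum.mono_neutral_left)
    show "\<forall>i\<in>{..<3} - {..<L}. g i = 0"
    proof
      fix i assume "i \<in> {..<3} - {..<L}"
      then have "i = (i - L) + L" by auto
      then have "(ad u ^^ i) v = (ad u ^^ (i - L)) ((ad u ^^ L) v)"
        by (metis funpow_add o_apply)
      also have "\<dots> = 0" using PL v by (simp add: P_def funpow_0)
      finally show "g i = 0" by (simp add: g_def smat_def vec_eq_iff)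
    qed
  qed (use L3 in auto)
  also have "\<dots> = v + ad u v + smat (1/2) (ad u (ad u v))"
    by (simp add: g_def eval_nat_numeral mat2_eq)
  finally show ?thesis .
qed

definition mk :: "'a::comm_ring_1 \<Rightarrow> 'a \<Rightarrow> 'a \<Rightarrow> 'a \<Rightarrow> 'a^2^2" where
  "mk a b c d = vector [vector [a, b], vector [c, d]]"
lemma mk_ent[simp]: "mk a b c d $1$1 = a" "mk a b c d $1$2 = b" "mk a b c d $2$1 = c" "mk a b c d $2$2 = d"
  by (simp_all add: mk_def)

definition "Xm = mk 2 (-1) 1 (0::int)"
definition "Ym = mk 1 0 1 (1::int)"
definition "Zm = mk 1 (-1) 0 (1::int)"

lemma XYZ_SL: "Xm \<in> SL2Z" "Ym \<in> SL2Z" "Zm \<in> SL2Z"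
  by (simp_all add: SL2Z_def det_2 Xm_def Ym_def Zm_def)

lemma ad_ent: "ad u v $ i $ j = (u ** v) $ i $ j - (v ** u) $ i $ j"
  by (simp add: ad_def lb_ent)

lemma exp_x: "exp_ad xs = (hat Xm :: 'a::field_char_0 mat2 \<Rightarrow> 'a mat2)"
proof
  fix v :: "'a mat2"
  show "exp_ad xs v = hat Xm v"
  proof (cases "v \<in> sl2")
    case True
    have "\<And>w. ad xs (ad xs (ad xs w)) = (0::'a mat2)"
      by (simp add: mat2_eq ad_ent mult2 xs_def algebra_simps)
    then show ?thesis using True XYZ_SL
      by (simp add: exp_ad_eq hat_eq cj_def mat2_eq ad_ent mult2 xs_def Xm_def algebra_simps)
  next
    case False then show ?thesis by (simp add: exp_ad_def hat_def)
  qed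
qed

lemma exp_y: "exp_ad ys = (hat Ym :: 'a::field_char_0 mat2 \<Rightarrow> 'a mat2)"
proof
  fix v :: "'a mat2"
  show "exp_ad ys v = hat Ym v"
  proof (cases "v \<in> sl2")
    case True
    have "\<And>w. ad ys (ad ys (ad ys w)) = (0::'a mat2)"
      by (simp add: mat2_eq ad_ent mult2 ys_def algebra_simps)
    then show ?thesis using True XYZ_SL
      by (simp add: exp_ad_eq hat_eq cj_def mat2_eq ad_ent mult2 ys_def Ym_def algebra_simps)
  next
    case False then show ?thesis by (simp add: exp_ad_def hat_def)
  qed
qed

lemma exp_z: "exp_ad zs = (hat Zm :: 'a::field_char_0 mat2 \<Rightarrow> 'a mat2)"
proof
  fix v :: "'a mat2"
  show "exp_ad zs v = hat Zm v"
  proof (cases "v \<in> sl2")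
    case True
    have "\<And>w. ad zs (ad zs (ad zs w)) = (0::'a mat2)"
      by (simp add: mat2_eq ad_ent mult2 zs_def algebra_simps)
    then show ?thesis using True XYZ_SL
      by (simp add: exp_ad_eq hat_eq cj_def mat2_eq ad_ent mult2 zs_def Zm_def algebra_simps)
  next
    case False then show ?thesis by (simp add: exp_ad_def hat_def)
  qed
qed

lemma gens_eq: "(gens :: ('a::field_char_0 mat2 \<Rightarrow> 'a mat2) set) = {hat Xm, hat Ym, hat Zm}"
  by (simp add: gens_def exp_x exp_y exp_z)

lemma hat_inv: "t \<in> SL2Z \<Longrightarrow> u \<in> sl2 \<Longrightarrow> hat (adj2 t) (hat t u) = (u::'a::field_char_0 mat2)"
  "t \<in> SL2Z \<Longrightarrow> u \<in> sl2 \<Longrightarrow> hat t (hat (adj2 t) u) = (u::'a::field_char_0 mat2)"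
  by (simp_all add: hat_eq hat_sl2 adj2_SL2Z MF_adj2 cj_one cj_one' SL2Z_det cj_sl2 det_adj2)

lemma SL_mult: "a \<in> SL2Z \<Longrightarrow> b \<in> SL2Z \<Longrightarrow> a ** b \<in> SL2Z"
  by (simp add: SL2Z_def det_mul)

lemma hat_invcomp:
  assumes S: "S \<in> SL2Z" and t: "t \<in> SL2Z"
  shows "restrict (inv_into sl2 (hat S) \<circ> hat t) sl2 = (hat (adj2 S ** t) :: 'a::field_char_0 mat2 \<Rightarrow> 'a mat2)"
proof
  fix u :: "'a mat2"
  show "restrict (inv_into sl2 (hat S) \<circ> hat t) sl2 u = hat (adj2 S ** t) u"
  proof (cases "u \<in> sl2")
    case True
    have "hat S \<in> (Aut_sl2 :: ('a mat2 \<Rightarrow> 'a mat2) set)" using hat_aut[OF S] .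
    then have inj: "inj_on (hat S) (sl2::'a mat2 set)"
      unfolding Aut_sl2_def bij_betw_def by blast
    have y: "hat (adj2 S ** t) u \<in> sl2" using True S t by (simp add: hat_sl2 SL_mult adj2_SL2Z)
    have "hat (adj2 S ** t) u = hat (adj2 S) (hat t u)"
      using hat_comp[OF adj2_SL2Z[OF S] t, where 'a="'a"] True by simp
    then have "hat S (hat (adj2 S ** t) u) = hat t u" using hat_inv(2)[OF S] hat_sl2[OF t True] by simp
    then have "inv_into sl2 (hat S) (hat t u) = hat (adj2 S ** t) u"
      using inv_into_f_f[OF inj y] by simp
    then show ?thesis using True by simp
  next
    case False then show ?thesis by (simp add: hat_def)
  qed
qed

lemma G_sub: "g \<in> Ggrp \<Longrightarrow> g \<in> (hat ` SL2Z :: ('a::field_char_0 mat2 \<Rightarrow> 'a mat2) set)"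
proof (induction rule: Ggrp.induct)
  case Gid
  then show ?case using hat_id[of "mat 1"] by (metis image_eqI insertI1)
next
  case (Ggen g s)
  then obtain t where t: "t \<in> SL2Z" "g = hat t" by auto
  from Ggen.hyps(2) obtain S where S: "S \<in> SL2Z" "s = hat S"
    using XYZ_SL by (auto simp: gens_eq)
  have "restrict (s \<circ> g) sl2 = hat (S ** t)" using hat_comp[OF S(1) t(1), where 'a="'a"] t S by simp
  then show ?case using SL_mult[OF S(1) t(1)] by auto
next
  case (Ginv g s)
  then obtain t where t: "t \<in> SL2Z" "g = hat t" by auto
  from Ginv.hyps(2) obtain S where S: "S \<in> SL2Z" "s = hat S"
    using XYZ_SL by (auto simp: gens_eq)
  have "restrict (inv_into sl2 s \<circ> g) sl2 = hat (adj2 S ** t)" using hat_invcomp[OF S(1) t(1), where 'a="'a"] t S by simp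
  then show ?case using SL_mult[OF adj2_SL2Z[OF S(1)] t(1)] by auto
qed

lemma G_step: 
  assumes h: "hat t \<in> (Ggrp :: ('a::field_char_0 mat2 \<Rightarrow> 'a mat2) set)" and t: "t \<in> SL2Z"
   and g: "g \<in> {Zm, adj2 Zm, Ym, adj2 Ym}" shows "(hat (g ** t) :: 'a mat2 \<Rightarrow> 'a mat2) \<in> Ggrp"
proof -
  have gz: "hat Zm \<in> (gens :: ('a mat2 \<Rightarrow> 'a mat2) set)" "hat Ym \<in> (gens :: ('a mat2 \<Rightarrow> 'a mat2) set)"
    by (simp_all add: gens_eq)
  show ?thesis using g
  proof (elim insertE)
    assume "g = Zm" then show ?thesis
      using Ggrp.Ggen[OF h gz(1)] hat_comp[OF XYZ_SL(3) t, where 'a="'a"] by simp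
  next
    assume "g = Ym" then show ?thesis
      using Ggrp.Ggen[OF h gz(2)] hat_comp[OF XYZ_SL(2) t, where 'a="'a"] by simp
  next
    assume "g = adj2 Zm" then show ?thesis
      using Ggrp.Ginv[OF h gz(1)] hat_invcomp[OF XYZ_SL(3) t, where 'a="'a"] by simp
  next
    assume "g = adj2 Ym" then show ?thesis
      using Ggrp.Ginv[OF h gz(2)] hat_invcomp[OF XYZ_SL(2) t, where 'a="'a"] by simp
  qed simp
qed

inductive_set Prods :: "(int^2^2) set" where
  P1: "mat 1 \<in> Prods"
| Pm: "A \<in> Prods \<Longrightarrow> g \<in> {Zm, adj2 Zm, Ym, adj2 Ym} \<Longrightarrow> g ** A \<in> Prods"

lemma Prods_mult: "A \<in> Prods \<Longrightarrow> B \<in> Prods \<Longrightarrow> A ** B \<in> Prods"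
  by (induction rule: Prods.induct) (auto simp: matrix_mul_assoc[symmetric] intro: Prods.intros)

lemma Prods_G: "A \<in> Prods \<Longrightarrow> A \<in> SL2Z \<and> (\<forall>t\<in>SL2Z. hat t \<in> (Ggrp :: ('a::field_char_0 mat2 \<Rightarrow> 'a mat2) set) \<longrightarrow> hat (A ** t) \<in> (Ggrp :: ('a mat2 \<Rightarrow> 'a mat2) set))"
proof (induction rule: Prods.induct)
  case P1
  then show ?case by (simp add: SL2Z_def det_2 mat_ent)
next
  case (Pm A g)
  have g: "g \<in> SL2Z" using Pm.hyps(2) XYZ_SL adj2_SL2Z by auto
  show ?case
  proof (intro conjI ballI impI)
    show "g ** A \<in> SL2Z" using g Pm.IH SL_mult by blast
  next
    fix t assume t: "t \<in> SL2Z" "hat t \<in> (Ggrp :: ('a mat2 \<Rightarrow> 'a mat2) set)"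
    then have "hat (A ** t) \<in> (Ggrp :: ('a mat2 \<Rightarrow> 'a mat2) set)" using Pm.IH by blast
    from G_step[OF this SL_mult[OF _ t(1)] Pm.hyps(2)] Pm.IH
    show "hat (g ** A ** t) \<in> (Ggrp :: ('a mat2 \<Rightarrow> 'a mat2) set)"
      by (simp add: matrix_mul_assoc)
  qed
qed

definition "Wk k = mk 1 k 0 (1::int)"
definition "Sm = mk 0 (-1) 1 (0::int)"
definition "Si = mk 0 1 (-1) (0::int)"

lemma gen_in: "g \<in> {Zm, adj2 Zm, Ym, adj2 Ym} \<Longrightarrow> g \<in> Prods"
  using Pm[OF P1, of g] by simp

lemma Sm_in: "Sm \<in> Prods" "Si \<in> Prods"
proof -
  have "Sm = Zm ** (Ym ** Zm)" by (simp add: mat2_eq mult2 Sm_def Zm_def Ym_def)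
  then show "Sm \<in> Prods" by (metis Prods_mult gen_in insertI1 insertI2)
  have "Si = adj2 Zm ** (adj2 Ym ** adj2 Zm)" by (simp add: mat2_eq mult2 Si_def Zm_def Ym_def)
  then show "Si \<in> Prods" by (metis Prods_mult gen_in insertI1 insertI2)
qed

lemma Wk_in: "Wk k \<in> Prods"
proof (induct k rule: int_induct[where k=0])
  case base
  have "Wk 0 = mat 1" by (simp add: Wk_def mat2_eq mat_ent)
  then show ?case by (simp add: P1)
next
  case (step1 i)
  have "Wk (i + 1) = adj2 Zm ** Wk i" by (simp add: Wk_def Zm_def mat2_eq mult2)
  then show ?case using Pm[OF step1(2), of "adj2 Zm"] by simp
next
  case (step2 i)
  have "Wk (i - 1) = Zm ** Wk i" by (simp add: Wk_def Zm_def mat2_eq mult2)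
  then show ?case using Pm[OF step2(2), of "Zm"] by simp
qed

lemma euclid: "det (t::int^2^2) = 1 \<Longrightarrow> t \<in> Prods"
proof (induction "nat \<bar>t$2$1\<bar>" arbitrary: t rule: less_induct)
  case less
  show ?case
  proof (cases "t$2$1 = 0")
    case True
    then have "t$1$1 * t$2$2 = 1" using less.prems by (simp add: det_2)
    then have "(t$1$1 = 1 \<and> t$2$2 = 1) \<or> (t$1$1 = -1 \<and> t$2$2 = -1)" by (simp add: zmult_eq_1_iff)
    then show ?thesis
    proof
      assume "t$1$1 = 1 \<and> t$2$2 = 1"
      then have "t = Wk (t$1$2)" using True by (simp add: mat2_eq Wk_def)
      then show ?thesis using Wk_in by metis
    next
      assume "t$1$1 = -1 \<and> t$2$2 = -1"
      then have "t = Sm ** (Sm ** Wk (- t$1$2))" using True by (simp add: mat2_eq Wk_def Sm_def mult2)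
      then show ?thesis using Wk_in Sm_in Prods_mult by metis
    qed
  next
    case False
    define q where "q = t$1$1 div t$2$1"
    define t' where "t' = Sm ** (Wk (-q) ** t)"
    have e: "t' $2$1 = t$1$1 mod t$2$1"
      using div_mult_mod_eq[of "t$1$1" "t$2$1"] 
      by (simp add: t'_def mult2 Sm_def Wk_def q_def algebra_simps)
    have "nat \<bar>t'$2$1\<bar> < nat \<bar>t$2$1\<bar>" using e abs_mod_less[OF False] False by simp
    moreover have "det t' = 1"
    proof -
      have "det Sm = 1" "det (Wk (-q)) = 1" by (simp_all add: det_2 Sm_def Wk_def)
      then show ?thesis using less.prems by (simp add: t'_def det_mul)
    qed
    ultimately have "t' \<in> Prods" using less.hyps by blast
    moreover have "t = Wk q ** (Si ** t')"
      by (simp add: t'_def mat2_eq mult2 Sm_def Si_def Wk_def algebra_simps)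
    ultimately show ?thesis using Wk_in Sm_in Prods_mult by metis
  qed
qed

theorem theorem3p10:
  shows "(\<forall>\<theta>\<in>SL2Z. (hat \<theta> :: 'a::field_char_0 mat2 \<Rightarrow> 'a mat2) \<in> Aut_sl2)
    \<and> (\<forall>\<theta>1\<in>SL2Z. \<forall>\<theta>2\<in>SL2Z.
          (hat (\<theta>1 ** \<theta>2) :: 'a mat2 \<Rightarrow> 'a mat2) = restrict (hat \<theta>1 \<circ> hat \<theta>2) sl2)
    \<and> {\<theta>\<in>SL2Z. (hat \<theta> :: 'a mat2 \<Rightarrow> 'a mat2) = restrict id sl2} = {mat 1, - mat 1}
    \<and> (hat ` SL2Z :: ('a mat2 \<Rightarrow> 'a mat2) set) = Ggrp"
proof (intro conjI)
  show "\<forall>\<theta>\<in>SL2Z. (hat \<theta> :: 'a::field_char_0 mat2 \<Rightarrow> 'a mat2) \<in> Aut_sl2"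
    using hat_aut by blast
  show "\<forall>\<theta>1\<in>SL2Z. \<forall>\<theta>2\<in>SL2Z.
          (hat (\<theta>1 ** \<theta>2) :: 'a mat2 \<Rightarrow> 'a mat2) = restrict (hat \<theta>1 \<circ> hat \<theta>2) sl2"
    using hat_comp by blast
  show "{\<theta>\<in>SL2Z. (hat \<theta> :: 'a mat2 \<Rightarrow> 'a mat2) = restrict id sl2} = {mat 1, - mat 1}"
    using ker[where 'a='a] hat_id[where 'a='a] by blast
  have I: "mat 1 \<in> SL2Z" "(hat (mat 1) :: 'a mat2 \<Rightarrow> 'a mat2) \<in> Ggrp"
    using hat_id[of "mat 1", where 'a='a] Ggrp.Gid by auto
  show "(hat ` SL2Z :: ('a mat2 \<Rightarrow> 'a mat2) set) = Ggrp"
  proof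
    show "Ggrp \<subseteq> (hat ` SL2Z :: ('a mat2 \<Rightarrow> 'a mat2) set)" using G_sub by blast
    show "(hat ` SL2Z :: ('a mat2 \<Rightarrow> 'a mat2) set) \<subseteq> Ggrp"
    proof
      fix g assume "g \<in> (hat ` SL2Z :: ('a mat2 \<Rightarrow> 'a mat2) set)"
      then obtain t where t: "t \<in> SL2Z" "g = hat t" by auto
      then have "t \<in> Prods" using euclid by (simp add: SL2Z_def)
      then have "hat (t ** mat 1) \<in> (Ggrp :: ('a mat2 \<Rightarrow> 'a mat2) set)"
        using Prods_G[where 'a='a] I by blast
      then show "g \<in> Ggrp" using t by simp
    qed
  qed
qed

end
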